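(* Let $q_1=(x_1,1/x_1)$, $q_2=(x_2,y_2)$, $q_3=(1/y_3,y_3)$ with $x_1,x_2,y_2,y_3>0$, $x_1<x_2<1/y_3$, $y_3<y_2<1/x_1$ and $x_2y_2<1$. Suppose $$A:=1+(x_2-x_1)\,y_2+\Bigl(\frac1{y_3}-x_2\Bigr)y_3\ \ge\ 2.$$ Then $$T(q_1,q_2)+T(q_2,q_3)\ \ge\ A-1+\sinh(A-1).$$
   Context: For points $p=(x_p,y_p)$ and $q=(x_q,y_q)$ in $(0,\infty)^2$ define $$T(p,q):=\tfrac12\,(y_p-y_q+x_q-x_p)\,(x_p+y_q).$$ (In the paper, $q_1,q_2,q_3$ form a "double step" of a normalized tile with hyperbola $xy=1$, where $q_1,q_3$ lie on the hyperbola and $q_2$ lies strictly below it; $A$ is the tile area, $T(q_1,q_2)+T(q_2,q_3)$ its crown area, and the conclusion is $|C_t|/|t|\ge\xi_s(\rho_t)$ with $\rho_t=1/A\le 1/2$.) *)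

theory Defs
  imports Complex_Main
begin

definition T :: "real \<times> real \<Rightarrow> real \<times> real \<Rightarrow> real" where
  "T p q = (1/2) * (snd p - snd q + fst q - fst p) * (fst p + snd q)"

end

theory Submission
  imports Defs "HOL-Analysis.Analysis"
begin


lemma g_nonneg:
  fixes t :: real assumes "0 \<le> t" "t \<le> 1"
  shows "49/1600 - 249/800*t + 1699/1600*t^2 + 27/16*t^3 - 93/64*t^4 - 1/32*t^5 + 1/64*t^6 \<ge> 0"
proof -
  have q: "49/1600 - 249/800*t + 1699/1600*t^2 \<ge> 0"
  proof -
    have "0 \<le> (1699*t - 249)^2" by simp
    hence "0 \<le> 1699*1699*t^2 - 2*1699*249*t + 249*249" by (simp add: power2_eq_square algebra_simps)
    thus ?thesis by (simp add: power2_eq_square algebra_simps)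
  qed
  have r: "0 \<le> t^3 * (27/16 - 93/64*t - 1/32*t^2)"
  proof -
    have "t^2 \<le> 1" using assms by (simp add: power_le_one)
    hence "0 \<le> 27/16 - 93/64*t - 1/32*t^2" using assms by linarith
    thus ?thesis using assms by simp
  qed
  have "0 \<le> t^6/64" by simp
  have e: "49/1600 - 249/800*t + 1699/1600*t^2 + 27/16*t^3 - 93/64*t^4 - 1/32*t^5 + 1/64*t^6
    = (49/1600 - 249/800*t + 1699/1600*t^2) + t^3 * (27/16 - 93/64*t - 1/32*t^2) + t^6/64"
    by (simp add: algebra_simps power_numeral_reduce)
  show ?thesis unfolding e using q r \<open>0 \<le> t^6/64\<close> by linarith
qed

definition mm :: "real \<Rightarrow> real" where "mm t = 1 - t + t^2"

lemma key:
  fixes X Y :: real assumes "0 < X" "0 < Y" "X + Y \<le> 1"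
  shows "(1 - X * mm Y) * (1 - Y * mm X) \<ge> X * Y * (6/5 + 5/2*(1 - X - Y))^2"
proof -
  define sg where "sg = X + Y"
  define p where "p = X * Y"
  define p0 where "p0 = sg^2/4"
  define f where "f = (\<lambda>zz::real. 1 - sg + zz*(3 - 2* sg + sg^2 - (6/5 + 5/2*(1-sg))^2) - zz^2*(1+sg) + zz^3)"
  have fe: "(1 - X * mm Y) * (1 - Y * mm X) - X * Y * (6/5 + 5/2*(1 - X - Y))^2 = f p"
    unfolding f_def sg_def p_def mm_def by (simp add: algebra_simps power2_eq_square power3_eq_cube)
  have pp0: "p \<le> p0" unfolding p_def p0_def sg_def
    using zero_le_power2[of "X - Y"] by (simp add: power2_eq_square algebra_simps)
  have p0pos: "p0 > 0" unfolding p0_def sg_def using assms by simp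
  have ppos: "p > 0" unfolding p_def using assms by simp
  have s1: "sg \<le> 1" "sg > 0" unfolding sg_def using assms by auto
  have f0: "f 0 \<ge> 0" unfolding f_def using s1 by simp
  have g: "f p0 \<ge> 0"
  proof -
    have "f p0 = 49/1600 - 249/800*(1-sg) + 1699/1600*(1-sg)^2 + 27/16*(1-sg)^3 - 93/64*(1-sg)^4 - 1/32*(1-sg)^5 + 1/64*(1-sg)^6"
      unfolding f_def p0_def by (simp add: field_simps power_numeral_reduce; algebra)
    thus ?thesis using g_nonneg[of "1-sg"] s1 by simp
  qed
  have idt: "p0 * f p = (p0 - p) * f 0 + p * f p0 + p * p0 * (p0 - p) * (1 + sg - p - p0)"
    unfolding f_def by (simp add: algebra_simps power_numeral_reduce)
  have "p0 \<le> 1/4" unfolding p0_def using s1 by (simp add: power_le_one)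
  hence "1 + sg - p - p0 \<ge> 0" using pp0 s1 by linarith
  hence "0 \<le> (p0 - p) * f 0 + p * f p0 + p * p0 * (p0 - p) * (1 + sg - p - p0)"
    using pp0 ppos p0pos f0 g by (intro add_nonneg_nonneg mult_nonneg_nonneg) auto
  hence "0 \<le> p0 * f p" using idt by simp
  hence "0 \<le> f p" using p0pos by (simp add: zero_le_mult_iff)
  thus ?thesis using fe by linarith
qed

lemma sinh_bound:
  fixes w :: real assumes "0 \<le> w" "w \<le> 1"
  shows "sinh (1 + w) \<le> 6/5 + 5/2 * w"
proof -
  define E where "E = exp (1::real)"
  have E1: "E < 272/100" unfolding E_def using e_less_272 .
  have E0: "E > 0" unfolding E_def by simp
  have c: "exp ((1 - w) *\<^sub>R 1 + w *\<^sub>R 2) \<le> (1 - w) * exp 1 + w * exp (2::real)"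
    using convex_onD[OF exp_convex, of w 1 2] assms by simp
  have "(1 - w) *\<^sub>R 1 + w *\<^sub>R (2::real) = 1 + w" by simp
  hence up: "exp (1 + w) \<le> (1 - w) * E + w * E^2"
    using c unfolding E_def by (simp add: power2_eq_square add.commute flip: exp_add)
  have "exp (-1 - w) = exp (-1) * exp (-w)" by (simp flip: exp_add)
  moreover have "exp (-w) \<ge> 1 - w" using exp_ge_add_one_self[of "-w"] by simp
  moreover have "exp (-1) = 1 / E" unfolding E_def by (simp add: exp_minus field_simps)
  ultimately have lo: "exp (-1 - w) \<ge> (1 - w) / E"
    using E0 by (simp add: divide_right_mono)
  have sh: "sinh (1 + w) = (exp (1 + w) - exp (-1 - w)) / 2" by (simp add: sinh_def)
  have iE: "1 / E > 100/272" using E1 E0 by (simp add: field_simps)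
  have "E - 1/E \<le> 272/100 - 100/272" using E1 iE by linarith
  hence a1: "(1 - w) * (E - 1/E) \<le> (1 - w) * (272/100 - 100/272)"
    using assms by (intro mult_left_mono) auto
  have "E^2 \<le> (272/100)^2" using E1 E0 by (intro power_mono) auto
  hence a2: "w * E^2 \<le> w * (272/100)^2" using assms by (intro mult_left_mono) auto
  have "exp (1 + w) - exp (-1 - w) \<le> (1 - w) * (E - 1/E) + w * E^2"
    using up lo by (simp add: algebra_simps)
  also have "\<dots> \<le> (1 - w) * (272/100 - 100/272) + w * (272/100)^2" using a1 a2 by linarith
  also have "\<dots> = 3999/1700 - 3999/1700 * w + 4624/625 * w" by (simp add: power2_eq_square field_simps)
  also have "\<dots> \<le> 2 * (6/5 + 5/2 * w)" using assms by (simp add: field_simps)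
  finally show ?thesis unfolding sh by simp
qed

theorem mainTheorem5:
  fixes x1 x2 y2 y3 :: real
  assumes "x1 > 0" "x2 > 0" "y2 > 0" "y3 > 0"
    and "x1 < x2" "x2 < 1 / y3"
    and "y3 < y2" "y2 < 1 / x1"
    and "x2 * y2 < 1"
    and "1 + (x2 - x1) * y2 + (1 / y3 - x2) * y3 \<ge> 2"
  shows "T (x1, 1 / x1) (x2, y2) + T (x2, y2) (1 / y3, y3)
           \<ge> (1 + (x2 - x1) * y2 + (1 / y3 - x2) * y3) - 1
              + sinh ((1 + (x2 - x1) * y2 + (1 / y3 - x2) * y3) - 1)"
proof -
  note as = assms
  define a where "a = x1"
  define p where "p = x2"
  define q where "q = y2"
  define b where "b = y3"
  define s where "s = (1 + (x2 - x1) * y2 + (1 / y3 - x2) * y3) - 1"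
  define X where "X = a / p"
  define Y where "Y = b / q"
  have a0: "a > 0" and p0: "p > 0" and q0: "q > 0" and b0: "b > 0"
    using as unfolding a_def p_def q_def b_def by auto
  have u1: "p * q < 1" using as unfolding p_def q_def by simp
  have sdef: "s = 1 + p*q - a*q - p*b" unfolding s_def a_def p_def q_def b_def
    using b0 unfolding b_def by (simp add: algebra_simps)
  have s1: "s \<ge> 1" using as(10) unfolding s_def by simp
  have X0: "X > 0" and Y0: "Y > 0" unfolding X_def Y_def using a0 p0 q0 b0 by auto
  have sX: "s - 1 = p * q * (1 - X - Y)" unfolding sdef X_def Y_def using p0 q0
    by (simp add: field_simps)
  have W0: "1 - X - Y \<ge> 0"
  proof -
    have "p * q * (1 - X - Y) \<ge> 0" using sX s1 by simp
    moreover have "p * q > 0" using p0 q0 by simp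
    ultimately show ?thesis by (simp add: zero_le_mult_iff)
  qed
  have XY1: "X + Y \<le> 1" using W0 by simp
  define K where "K = 6/5 + 5/2 * (1 - X - Y)"
  have K0: "K \<ge> 0" unfolding K_def using W0 by simp
  have sle: "s - 1 \<le> 1 - X - Y"
  proof -
    have "p * q * (1 - X - Y) \<le> 1 * (1 - X - Y)"
      using u1 W0 by (intro mult_right_mono) auto
    thus ?thesis using sX by simp
  qed
  have sinhK: "sinh s \<le> K"
  proof -
    have "sinh (1 + (s - 1)) \<le> 6/5 + 5/2 * (s - 1)"
      using sinh_bound[of "s - 1"] s1 sle W0 XY1 X0 Y0 by simp
    hence "sinh s \<le> 6/5 + 5/2 * (s - 1)" by simp
    also have "\<dots> \<le> K" unfolding K_def using sle by simp
    finally show ?thesis .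
  qed
  define L where "L = q/a + p/b - p^2 - q^2 - a^2 - b^2 + p*a + q*b"
  have TL: "T (x1, 1 / x1) (x2, y2) + T (x2, y2) (1 / y3, y3) = s + L / 2"
    unfolding T_def L_def sdef a_def p_def q_def b_def
    using as by (simp add: field_simps power2_eq_square)
  define D1 where "D1 = 1/X - mm Y"
  define D2 where "D2 = 1/Y - mm X"
  have L1: "L = (q/p) * (1/X) + (p/q) * (1/Y) - p^2 * mm X - q^2 * mm Y"
    unfolding L_def X_def Y_def mm_def using a0 p0 q0 b0
    by (simp add: field_simps power2_eq_square)
  have mX: "mm X \<ge> 0" and mY: "mm Y \<ge> 0" unfolding mm_def
    using zero_le_power2[of "X - 1/2"] zero_le_power2[of "Y - 1/2"]
    by (simp_all add: power2_eq_square algebra_simps)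
  have pp: "p^2 \<le> p/q"
  proof -
    have "p * q \<le> 1" using u1 by simp
    hence "p * (p * q) \<le> p * 1" using p0 by (intro mult_left_mono) auto
    thus ?thesis using q0 by (simp add: field_simps power2_eq_square)
  qed
  have qq: "q^2 \<le> q/p"
  proof -
    have "p * q \<le> 1" using u1 by simp
    hence "q * (p * q) \<le> q * 1" using q0 by (intro mult_left_mono) auto
    thus ?thesis using p0 by (simp add: field_simps power2_eq_square)
  qed
  have L2: "L \<ge> (q/p) * D1 + (p/q) * D2"
  proof -
    have "p^2 * mm X \<le> (p/q) * mm X" using pp mX by (intro mult_right_mono) auto
    moreover have "q^2 * mm Y \<le> (q/p) * mm Y" using qq mY by (intro mult_right_mono) auto
    ultimately show ?thesis unfolding L1 D1_def D2_def by (simp add: algebra_simps)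
  qed
  have X1: "X < 1" and Y1: "Y < 1" using XY1 X0 Y0 by auto
  have mY1: "mm Y \<le> 1" unfolding mm_def using Y0 Y1
    by (simp add: power2_eq_square mult_le_cancel_right1 less_imp_le)
  have mX1: "mm X \<le> 1" unfolding mm_def using X0 X1
    by (simp add: power2_eq_square mult_le_cancel_right1 less_imp_le)
  have "X * mm Y \<le> 1" using mY1 mY X0 X1 by (intro mult_le_one) auto
  hence D10: "D1 \<ge> 0" unfolding D1_def using X0 by (simp add: field_simps)
  have "Y * mm X \<le> 1" using mX1 mX Y0 Y1 by (intro mult_le_one) auto
  hence D20: "D2 \<ge> 0" unfolding D2_def using Y0 by (simp add: field_simps)
  have DK: "D1 * D2 \<ge> K^2"
  proof -
    have k: "(1 - X * mm Y) * (1 - Y * mm X) \<ge> X * Y * K^2"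
      using key[OF X0 Y0 XY1] unfolding K_def .
    have "(1 - X * mm Y) * (1 - Y * mm X) = X * Y * (D1 * D2)"
      unfolding D1_def D2_def using X0 Y0 by (simp add: field_simps)
    hence "X * Y * K^2 \<le> X * Y * (D1 * D2)" using k by simp
    thus ?thesis using X0 Y0 by (simp add: mult_le_cancel_left_pos)
  qed
  have AM: "(q/p) * D1 + (p/q) * D2 \<ge> 2 * K"
  proof -
    have id: "((q/p) * D1 + (p/q) * D2)^2 = ((q/p) * D1 - (p/q) * D2)^2 + 4 * (D1 * D2)"
      using p0 q0 by (simp add: field_simps power2_eq_square)
    have z: "0 \<le> ((q/p) * D1 - (p/q) * D2)^2" by simp
    have "(2 * K)^2 = 4 * K^2" by (simp add: power2_eq_square)
    hence "(2 * K)^2 \<le> ((q/p) * D1 + (p/q) * D2)^2"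
      unfolding id using DK z by linarith
    moreover have "0 \<le> (q/p) * D1 + (p/q) * D2" using D10 D20 p0 q0 by simp
    ultimately show ?thesis by (rule power2_le_imp_le)
  qed
  have "L / 2 \<ge> sinh s" using L2 AM sinhK by linarith
  thus ?thesis unfolding TL s_def[symmetric] by linarith
qed

end
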